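(* For $s,L$ large enough, the deterministic subset $\Xi=[-s,s]\cap\mathbb{Z}_L$ is typically $s$-sparse and is $s/16$-cosine generic.
   Context: $\mathbb{Z}_L=\{\lfloor-(L-1)/2\rfloor,\dots,\lfloor(L-1)/2\rfloor\}$. A (possibly deterministic) random subset $\Xi\subset\mathbb{Z}_L$ is typically $s$-sparse if for some fixed constants $\alpha,\beta>0$ we have $\alpha s\le|\Xi|\le\beta s$ with probability $1-o_L(1)$. With $\mathcal{V}(\Xi,a)=\mathbf{1}_{\{0\in\Xi\}}+2\sum_{k\in\Xi\setminus\{0\}}\cos^2(2\pi ak/L)$, $\Xi$ is $\Gamma$-cosine generic if with probability $1-o_L(1)$, $\min_{a\in\mathbb{Z}_L}\mathcal{V}(\Xi,a)\ge\Gamma(1-o_L(1))$. *)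

theory Defs
  imports "HOL-Analysis.Analysis"
begin

definition ZL :: "nat \<Rightarrow> int set" where
  "ZL L = {\<lfloor>- (real L - 1) / 2\<rfloor> .. \<lfloor>(real L - 1) / 2\<rfloor>}"

definition cosV :: "nat \<Rightarrow> int set \<Rightarrow> int \<Rightarrow> real" where
  "cosV L Xi a = (if 0 \<in> Xi then 1 else 0)
      + 2 * (\<Sum>k\<in>Xi - {0}. (cos (2 * pi * real_of_int a * real_of_int k / real L))^2)"

text \<open>Deterministic families of subsets Xi L of Z_L (indexed by L): the probability
  1 - o_L(1) events become events holding for all sufficiently large L.\<close>
definition typically_sparse :: "(nat \<Rightarrow> int set) \<Rightarrow> (nat \<Rightarrow> real) \<Rightarrow> bool" where
  "typically_sparse Xi s \<longleftrightarrow>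
     (\<exists>\<alpha> \<beta>. \<alpha> > 0 \<and> \<beta> > 0 \<and>
        (\<forall>\<^sub>F L in sequentially. \<alpha> * s L \<le> real (card (Xi L)) \<and> real (card (Xi L)) \<le> \<beta> * s L))"

definition cosine_generic :: "(nat \<Rightarrow> int set) \<Rightarrow> (nat \<Rightarrow> real) \<Rightarrow> bool" where
  "cosine_generic Xi \<Gamma> \<longleftrightarrow>
     (\<exists>e. e \<longlonglongrightarrow> 0 \<and>
        (\<forall>\<^sub>F L in sequentially. Min ((\<lambda>a. cosV L (Xi L) a) ` ZL L) \<ge> \<Gamma> L * (1 - e L)))"

definition interval_set :: "nat \<Rightarrow> nat \<Rightarrow> int set" where
  "interval_set s L = {k \<in> ZL L. - int s \<le> k \<and> k \<le> int s}"

end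

theory Submission
  imports Defs
begin

lemma cos_pair: "cos x ^ 2 + cos (2 * x) ^ 2 \<ge> (1/4::real)"
proof -
  define c where "c = cos x ^ 2"
  have e: "cos (2*x) ^ 2 = (2 * c - 1)^2" by (simp add: cos_double_cos c_def)
  have "(4 * c - 3/2)^2 \<ge> 0" by simp
  then have "c + (2*c-1)^2 \<ge> 1/4" by (simp add: power2_eq_square algebra_simps)
  then show ?thesis using e c_def by simp
qed

lemma sum_lb:
  fixes p :: real
  shows "(\<Sum>k=1..2*m. cos (p * real k) ^ 2) \<ge> real m / 8"
proof -
  define f where "f = (\<lambda>k::nat. cos (p * real k) ^ 2)"
  have fnn: "\<And>k. f k \<ge> 0" by (simp add: f_def)
  have "real m / 4 \<le> (\<Sum>k=1..m. f k + f (2*k))"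
  proof -
    have "(\<Sum>k=1..m. f k + f (2*k)) \<ge> (\<Sum>k=1..m. (1/4::real))"
      apply (rule sum_mono) unfolding f_def using cos_pair[of "p * real _"]
      by (simp add: algebra_simps)
    then show ?thesis by simp
  qed
  also have "\<dots> = (\<Sum>k=1..m. f k) + (\<Sum>k=1..m. f (2*k))" by (simp add: sum.distrib)
  also have "(\<Sum>k=1..m. f k) \<le> (\<Sum>k=1..2*m. f k)"
    by (rule sum_mono2) (auto simp: fnn)
  also have "(\<Sum>k=1..m. f (2*k)) = (\<Sum>k\<in>(\<lambda>k. 2*k) ` {1..m}. f k)"
    by (subst sum.reindex) (auto simp: inj_on_def)
  also have "\<dots> \<le> (\<Sum>k=1..2*m. f k)"
    by (rule sum_mono2) (auto simp: fnn)
  finally show ?thesis unfolding f_def by simp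
qed

lemma sum_lb2:
  fixes p :: real
  shows "(\<Sum>k=1..t. cos (p * real k) ^ 2) \<ge> (real t - 1) / 16"
proof -
  have "(\<Sum>k=1..2*(t div 2). cos (p * real k) ^ 2) \<le> (\<Sum>k=1..t. cos (p * real k) ^ 2)"
    by (rule sum_mono2) auto
  moreover have "2*(t div 2) + 1 \<ge> t" by arith
  then have "real (2*(t div 2) + 1) \<ge> real t" by linarith
  then have "real (t div 2) \<ge> (real t - 1) / 2" by simp
  ultimately show ?thesis using sum_lb[where p=p and m="t div 2"] by linarith
qed

lemma V_lb:
  assumes L1: "L \<ge> 1" and sL: "s \<le> L" and a: "a \<in> ZL L"
  shows "cosV L (interval_set s L) a \<ge> real s / 16"
proof -
  define u where "u = nat \<lfloor>(real L - 1)/2\<rfloor>"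
  define t where "t = min s u"
  define p where "p = 2 * pi * real_of_int a / real L"
  define g where "g = (\<lambda>k::int. (cos (2 * pi * real_of_int a * real_of_int k / real L))^2)"
  have u0: "\<lfloor>(real L - 1)/2\<rfloor> \<ge> 0" using L1 by simp
  have ul: "real u \<ge> (real L - 1)/2 - 1" unfolding u_def using u0 by linarith
  have lo: "\<lfloor>- (real L - 1) / 2\<rfloor> \<le> 0" using L1 by simp
  have lo': "\<lfloor>(1 - real L) / 2\<rfloor> \<le> 0" using L1 by simp
  have fin: "finite (interval_set s L)"
    by (rule finite_subset[of _ "{- int s .. int s}"]) (auto simp: interval_set_def)
  have sub: "int ` {1..t} \<subseteq> interval_set s L - {0}"
  proof
    fix k assume "k \<in> int ` {1..t}"
    then obtain j where j: "k = int j" "1 \<le> j" "j \<le> t" by auto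
    have "j \<le> u" "j \<le> s" using j t_def by auto
    then have "int j \<le> \<lfloor>(real L - 1)/2\<rfloor>" using u_def u0 by linarith
    moreover have "k \<in> ZL L" unfolding ZL_def
      unfolding atLeastAtMost_iff by (intro conjI) (use j lo \<open>int j \<le> \<lfloor>(real L - 1)/2\<rfloor>\<close> in linarith)+
    ultimately show "k \<in> interval_set s L - {0}" using j lo lo' \<open>j \<le> s\<close>
      by (auto simp: interval_set_def)
  qed
  have "(\<Sum>k\<in>int ` {1..t}. g k) \<le> (\<Sum>k\<in>interval_set s L - {0}. g k)"
    by (rule sum_mono2) (use fin sub in \<open>auto simp: g_def\<close>)
  moreover have "(\<Sum>k\<in>int ` {1..t}. g k) = (\<Sum>k=1..t. cos (p * real k) ^ 2)"
    by (subst sum.reindex) (auto simp: g_def p_def intro!: sum.cong)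
  moreover have "(\<Sum>k=1..t. cos (p * real k) ^ 2) \<ge> (real t - 1) / 16" by (rule sum_lb2)
  moreover have "0 \<in> interval_set s L" using lo u0 by (auto simp: interval_set_def ZL_def)
  ultimately have "cosV L (interval_set s L) a \<ge> 1 + 2 * ((real t - 1) / 16)"
    unfolding cosV_def g_def by simp
  moreover have "2 * real t + 14 \<ge> real s"
  proof -
    have "real s \<le> real L" using sL by simp
    show ?thesis
    proof (cases "s \<le> u")
      case True then show ?thesis unfolding t_def by simp
    next
      case False then have "t = u" unfolding t_def by simp
      have "real s \<le> 2 * real u + 3" using ul \<open>real s \<le> real L\<close> by (simp add: field_simps)
      then show ?thesis using \<open>t = u\<close> by simp
    qed
  qed
  ultimately show ?thesis by (simp add: field_simps)
qed

lemma card_lb: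
  assumes L1: "L \<ge> 1" and sL: "s \<le> L"
  shows "real s \<le> 2 * real (card (interval_set s L)) + 3"
proof -
  define u where "u = nat \<lfloor>(real L - 1)/2\<rfloor>"
  define t where "t = min s u"
  have u0: "\<lfloor>(real L - 1)/2\<rfloor> \<ge> 0" using L1 by simp
  have ul: "real u \<ge> (real L - 1)/2 - 1" unfolding u_def using u0 by linarith
  have lo: "\<lfloor>- (real L - 1) / 2\<rfloor> \<le> 0" using L1 by simp
  have fin: "finite (interval_set s L)"
    by (rule finite_subset[of _ "{- int s .. int s}"]) (auto simp: interval_set_def)
  have sub: "int ` {1..t} \<subseteq> interval_set s L"
  proof
    fix k assume "k \<in> int ` {1..t}"
    then obtain j where j: "k = int j" "1 \<le> j" "j \<le> t" by auto
    have "j \<le> u" "j \<le> s" using j t_def by auto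
    then have "int j \<le> \<lfloor>(real L - 1)/2\<rfloor>" using u_def u0 by linarith
    moreover have "k \<in> ZL L" unfolding ZL_def
      unfolding atLeastAtMost_iff by (intro conjI) (use j lo \<open>int j \<le> \<lfloor>(real L - 1)/2\<rfloor>\<close> in linarith)+
    ultimately show "k \<in> interval_set s L" using j \<open>j \<le> s\<close>
      by (auto simp: interval_set_def)
  qed
  have "card (int ` {1..t}) \<le> card (interval_set s L)" by (rule card_mono[OF fin sub])
  then have ct: "t \<le> card (interval_set s L)" by (simp add: card_image)
  have "real s \<le> 2 * real t + 3"
  proof -
    have "real s \<le> real L" using sL by simp
    show ?thesis
    proof (cases "s \<le> u")
      case True then show ?thesis unfolding t_def by simp
    next
      case False then have "t = u" unfolding t_def by simp
      have "real s \<le> 2 * real u + 3" using ul \<open>real s \<le> real L\<close> by (simp add: field_simps)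
      then show ?thesis using \<open>t = u\<close> by simp
    qed
  qed
  then show ?thesis using ct by (simp add: field_simps)
qed

lemma card_ub: "card (interval_set s L) \<le> 2 * s + 1"
proof -
  have "card (interval_set s L) \<le> card {- int s .. int s}"
    by (rule card_mono) (auto simp: interval_set_def)
  then show ?thesis by simp
qed

theorem lemma5p9:
  fixes s :: "nat \<Rightarrow> nat"
  assumes "filterlim s at_top sequentially"
    and "\<forall>L. s L \<le> L"
  shows "typically_sparse (\<lambda>L. interval_set (s L) L) (\<lambda>L. real (s L))
       \<and> cosine_generic (\<lambda>L. interval_set (s L) L) (\<lambda>L. real (s L) / 16)"
proof -
  have ev: "\<forall>\<^sub>F L in sequentially. s L \<ge> 4"
    using assms(1) by (simp add: filterlim_at_top)
  have ev2: "\<forall>\<^sub>F L in sequentially. s L \<ge> 4 \<and> L \<ge> 1"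
    using ev
  proof eventually_elim
    case (elim L)
    then show ?case using assms(2) le_trans[of 4 "s L" L] by auto
  qed
  have A: "typically_sparse (\<lambda>L. interval_set (s L) L) (\<lambda>L. real (s L))"
    unfolding typically_sparse_def
  proof (intro exI conjI)
    show "(1/8::real) > 0" "(3::real) > 0" by auto
    show "\<forall>\<^sub>F L in sequentially. 1/8 * real (s L) \<le> real (card (interval_set (s L) L))
        \<and> real (card (interval_set (s L) L)) \<le> 3 * real (s L)"
      using ev2
    proof eventually_elim
      case (elim L)
      have c1: "real (s L) \<le> 2 * real (card (interval_set (s L) L)) + 3"
        using card_lb[of L "s L"] elim assms(2) by auto
      have c2: "card (interval_set (s L) L) \<le> 2 * s L + 1" by (rule card_ub)
      then have c2': "real (card (interval_set (s L) L)) \<le> 2 * real (s L) + 1" by linarith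
      have s4: "real (s L) \<ge> 4" using elim by simp
      show ?case using c1 c2' s4 by (simp add: field_simps)
    qed
  qed
  have B: "cosine_generic (\<lambda>L. interval_set (s L) L) (\<lambda>L. real (s L) / 16)"
    unfolding cosine_generic_def
  proof (intro exI conjI)
    show "(\<lambda>L. 0::real) \<longlonglongrightarrow> 0" by simp
    show "\<forall>\<^sub>F L in sequentially. real (s L) / 16 * (1 - 0)
        \<le> Min ((\<lambda>a. cosV L (interval_set (s L) L) a) ` ZL L)"
      using ev2
    proof eventually_elim
      case (elim L)
      have fin: "finite (ZL L)" by (simp add: ZL_def)
      have "0 \<in> ZL L" using elim by (simp add: ZL_def)
      then have ne: "ZL L \<noteq> {}" by auto
      have "\<forall>a\<in>ZL L. real (s L) / 16 \<le> cosV L (interval_set (s L) L) a"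
        using V_lb[of L "s L"] elim assms(2) by auto
      then have "real (s L) / 16 \<le> Min ((\<lambda>a. cosV L (interval_set (s L) L) a) ` ZL L)"
        using fin ne by (subst Min_ge_iff) auto
      then show ?case by simp
    qed
  qed
  show ?thesis using A B by blast
qed

end
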